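(* Let $Q=\langle b\rangle\ltimes_{(g,\gamma)}X$ and let $S$ be a nonempty subset of $Q$. Then $S$ is a normal subloop of $Q$ with $S\cap(1\times X)=S\cap(C\times 0)=\{(1,0)\}$ if and only if there exist $k\in\mathbb Z$ and $z\in X$ such that $S=\langle(b^k,z)\rangle=\{(b^{ki},iz):i\in\mathbb Z\}$, the orders satisfy $|b^k|=|z|$, and $(b^k,z)\in Z(Q)$.
   Context: Let $(X,+)$ be an abelian group and $(g,\gamma)$ a construction pair on it: $g$ a permutation of $X$, $\gamma:X\times X\to X$ symmetric, alternating, biadditive, with (C1) $g^{-1}(g(x)+g(y))=x+y+\gamma(x,y)+g^{-1}(\gamma(x,y))+g^{-2}(\gamma(x,y))$, (C2) $\gamma(\gamma(x,y),z)=0$, (C3) $g^{-1}(\gamma(x,y))=\gamma(g(x),y)$ for all $x,y,z$. Let $\mathrm{Rad}(\gamma)=\{x:\gamma(x,y)=0\ \forall y\}$ and $r(g,\gamma)$ the least positive $r$ with $\sum_{0\le k<r}g^k(x)\in\mathrm{Rad}(\gamma)$ for all $x$ ($\infty$ if none). $I(i,j)$ is $\emptyset$ if $i=j$, $\{i,\dots,j-1\}$ if $i<j$, $\{j,\dots,i-1\}$ if $j<i$. For a cyclic group $C=\langle b\rangle$ such that (if finite) $|g|$ and $r(g,\gamma)$ divide $|C|$, $C\ltimes_{(g,\gamma)}X$ is the Moufang loop on $C\times X$ with multiplication $(b^i,x)(b^j,y)=(b^{i+j},g^{-j}(x)+y+\sum_{k\in I(i+j,-j)}g^{-k}(\gamma(x,y)))$,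 neutral element $(1,0)$. $Z(Q)$ is the center: elements of the nucleus that commute with all elements. *)

theory Defs
  imports Main
begin

(* Integer powers of a permutation g of the abelian group X (X = UNIV :: 'a). *)
definition gpow :: "('a \<Rightarrow> 'a) \<Rightarrow> int \<Rightarrow> 'a \<Rightarrow> 'a" where
  "gpow g k = (if 0 \<le> k then g ^^ nat k else (inv g) ^^ nat (- k))"

fun nsmul :: "nat \<Rightarrow> 'a::ab_group_add \<Rightarrow> 'a" where
  "nsmul 0 x = 0"
| "nsmul (Suc m) x = x + nsmul m x"

definition zsmul :: "int \<Rightarrow> 'a::ab_group_add \<Rightarrow> 'a" where
  "zsmul i x = (if 0 \<le> i then nsmul (nat i) x else - nsmul (nat (- i)) x)"

(* additive order of z in X; 0 encodes infinite order *)
definition addord :: "'a::ab_group_add \<Rightarrow> nat" where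
  "addord z = (if \<exists>m>0. nsmul m z = 0 then (LEAST m. m > 0 \<and> nsmul m z = 0) else 0)"

(* The cyclic group C = <b> of order n (n = 0: infinite cyclic) is modelled by
   exponents i :: int normalised as i mod n (so b^i ~ i mod n).
   Order of b^k in C; 0 encodes infinite order. *)
definition cord :: "nat \<Rightarrow> int \<Rightarrow> nat" where
  "cord n k = (if \<exists>m>0. (int m * k) mod int n = 0
               then (LEAST m. m > 0 \<and> (int m * k) mod int n = 0) else 0)"

definition Rad :: "('a \<Rightarrow> 'a \<Rightarrow> 'a::ab_group_add) \<Rightarrow> 'a set" where
  "Rad \<gamma> = {x. \<forall>y. \<gamma> x y = 0}"

definition r_prop :: "('a \<Rightarrow> 'a) \<Rightarrow> ('a \<Rightarrow> 'a \<Rightarrow> 'a::ab_group_add) \<Rightarrow> nat \<Rightarrow> bool" where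
  "r_prop g \<gamma> r = (\<forall>x. (\<Sum>k<r. (g ^^ k) x) \<in> Rad \<gamma>)"

definition construction_pair :: "('a \<Rightarrow> 'a) \<Rightarrow> ('a \<Rightarrow> 'a \<Rightarrow> 'a::ab_group_add) \<Rightarrow> bool" where
  "construction_pair g \<gamma> \<longleftrightarrow>
     bij g
   \<and> (\<forall>x y. \<gamma> x y = \<gamma> y x)
   \<and> (\<forall>x. \<gamma> x x = 0)
   \<and> (\<forall>x y z. \<gamma> (x + y) z = \<gamma> x z + \<gamma> y z)
   \<and> (\<forall>x y z. \<gamma> x (y + z) = \<gamma> x y + \<gamma> x z)
   \<and> (\<forall>x y. inv g (g x + g y) = x + y + \<gamma> x y + inv g (\<gamma> x y) + inv g (inv g (\<gamma> x y)))
   \<and> (\<forall>x y z. \<gamma> (\<gamma> x y) z = 0)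
   \<and> (\<forall>x y. inv g (\<gamma> x y) = \<gamma> (g x) y)"

(* hypothesis on C of order n: if finite, |g| and r(g,gamma) divide |C| *)
definition admissible_order :: "nat \<Rightarrow> ('a \<Rightarrow> 'a) \<Rightarrow> ('a \<Rightarrow> 'a \<Rightarrow> 'a::ab_group_add) \<Rightarrow> bool" where
  "admissible_order n g \<gamma> \<longleftrightarrow>
     (n > 0 \<longrightarrow> (g ^^ n = id
                 \<and> (\<exists>r>0. r_prop g \<gamma> r)
                 \<and> (LEAST r. r > 0 \<and> r_prop g \<gamma> r) dvd n))"

definition Iset :: "int \<Rightarrow> int \<Rightarrow> int set" where
  "Iset i j = (if i = j then {} else if i < j then {i..j - 1} else {j..i - 1})"

definition Qcar :: "nat \<Rightarrow> (int \<times> 'a) set" where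
  "Qcar n = {p. fst p mod int n = fst p}"

definition Qmult :: "nat \<Rightarrow> ('a \<Rightarrow> 'a) \<Rightarrow> ('a \<Rightarrow> 'a \<Rightarrow> 'a::ab_group_add)
                      \<Rightarrow> int \<times> 'a \<Rightarrow> int \<times> 'a \<Rightarrow> int \<times> 'a" where
  "Qmult n g \<gamma> p q = (case p of (i, x) \<Rightarrow> case q of (j, y) \<Rightarrow>
      ((i + j) mod int n,
       gpow g (- j) x + y + (\<Sum>k\<in>Iset (i + j) (- j). gpow g (- k) (\<gamma> x y))))"

definition Qldiv where
  "Qldiv n g \<gamma> a b = (THE z. z \<in> Qcar n \<and> Qmult n g \<gamma> a z = b)"

definition Qrdiv where
  "Qrdiv n g \<gamma> b a = (THE z. z \<in> Qcar n \<and> Qmult n g \<gamma> z a = b)"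

definition subloop where
  "subloop n g \<gamma> S \<longleftrightarrow> S \<subseteq> Qcar n \<and> S \<noteq> {}
     \<and> (\<forall>a\<in>S. \<forall>b\<in>S. Qmult n g \<gamma> a b \<in> S \<and> Qldiv n g \<gamma> a b \<in> S \<and> Qrdiv n g \<gamma> b a \<in> S)"

definition normal_subloop where
  "normal_subloop n g \<gamma> S \<longleftrightarrow> subloop n g \<gamma> S \<and>
     (\<forall>x\<in>Qcar n. \<forall>y\<in>Qcar n.
        (\<lambda>s. Qmult n g \<gamma> x s) ` S = (\<lambda>s. Qmult n g \<gamma> s x) ` S
      \<and> (\<lambda>s. Qmult n g \<gamma> x (Qmult n g \<gamma> y s)) ` S = (\<lambda>s. Qmult n g \<gamma> (Qmult n g \<gamma> x y) s) ` S
      \<and> (\<lambda>s. Qmult n g \<gamma> (Qmult n g \<gamma> s x) y) ` S = (\<lambda>s. Qmult n g \<gamma> s (Qmult n g \<gamma> x y)) ` S)"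

definition gen_subloop where
  "gen_subloop n g \<gamma> a = \<Inter> {T. subloop n g \<gamma> T \<and> a \<in> T}"

definition nucleus where
  "nucleus n g \<gamma> = {a \<in> Qcar n. \<forall>x\<in>Qcar n. \<forall>y\<in>Qcar n.
      Qmult n g \<gamma> (Qmult n g \<gamma> a x) y = Qmult n g \<gamma> a (Qmult n g \<gamma> x y)
    \<and> Qmult n g \<gamma> (Qmult n g \<gamma> x a) y = Qmult n g \<gamma> x (Qmult n g \<gamma> a y)
    \<and> Qmult n g \<gamma> (Qmult n g \<gamma> x y) a = Qmult n g \<gamma> x (Qmult n g \<gamma> y a)}"

definition center where
  "center n g \<gamma> = {a \<in> nucleus n g \<gamma>. \<forall>x\<in>Qcar n. Qmult n g \<gamma> a x = Qmult n g \<gamma> x a}"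

end

theory Submission
  imports Defs
begin

lemma nsmul_add: "nsmul (a+b) x = nsmul a x + nsmul b x"
  by (induct a) (simp_all add: add.assoc)

lemma nsmul_zero[simp]: "nsmul m (0::'a::ab_group_add) = 0"
  by (induct m) simp_all

lemma zsmul_0[simp]: "zsmul 0 x = 0" by (simp add: zsmul_def)
lemma zsmul_zero[simp]: "zsmul i (0::'a::ab_group_add) = 0" by (simp add: zsmul_def)
lemma zsmul_nat[simp]: "zsmul (int m) x = nsmul m x" by (simp add: zsmul_def)
lemma zsmul_1[simp]: "zsmul 1 x = x" by (simp add: zsmul_def)

lemma zsmul_succ: "zsmul (i+1) x = x + zsmul i x"
proof (cases "i \<ge> 0")
  case True
  then have "nat (i+1) = Suc (nat i)" by simp
  with True show ?thesis by (simp add: zsmul_def)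
next
  case False
  show ?thesis
  proof (cases "i = -1")
    case True then show ?thesis by (simp add: zsmul_def)
  next
    case False
    with \<open>\<not> i \<ge> 0\<close> have "nat (-i) = Suc (nat (-(i+1)))" by simp
    with \<open>\<not> i \<ge> 0\<close> False show ?thesis by (simp add: zsmul_def algebra_simps)
  qed
qed

lemma zsmul_add: "zsmul (a+b) x = zsmul a x + zsmul b x"
proof (induct b rule: int_induct[where k=0])
  case base then show ?case by simp
next
  case (step1 i)
  have "zsmul (a + (i+1)) x = zsmul ((a+i)+1) x" by (simp add: add.assoc)
  also have "... = x + zsmul (a+i) x" by (rule zsmul_succ)
  also have "... = zsmul a x + (x + zsmul i x)" using step1 by (simp add: algebra_simps)
  also have "... = zsmul a x + zsmul (i+1) x" by (simp add: zsmul_succ)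
  finally show ?case .
next
  case (step2 i)
  have e1: "zsmul i x = x + zsmul (i - 1) x" using zsmul_succ[of "i-1" x] by simp
  have e2: "zsmul (a+i) x = x + zsmul (a + (i - 1)) x" using zsmul_succ[of "a+(i-1)" x] by simp
  from step2 e1 e2 show ?case by (simp add: algebra_simps)
qed

lemma zsmul_neg: "zsmul (-i) x = - zsmul i x"
  using zsmul_add[of i "-i" x] by (simp add: eq_neg_iff_add_eq_0 add.commute)

definition ordZ :: "(int \<Rightarrow> bool) \<Rightarrow> nat" where
  "ordZ Z = (if \<exists>m>0. Z (int m) then LEAST m. m>0 \<and> Z (int m) else 0)"

lemma ordZ_dvd:
  assumes Z0: "Z 0" and Zadd: "\<And>i j. Z i \<Longrightarrow> Z j \<Longrightarrow> Z (i+j)" and Zneg: "\<And>i. Z i \<Longrightarrow> Z (-i)"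
  shows "Z i \<longleftrightarrow> int (ordZ Z) dvd i"
proof (cases "\<exists>m>0. Z (int m)")
  case True
  define c where "c = (LEAST m. m>0 \<and> Z (int m))"
  have oc: "ordZ Z = c" using True by (simp add: ordZ_def c_def)
  have c: "c > 0 \<and> Z (int c)" unfolding c_def using LeastI_ex[of "\<lambda>m. m>0 \<and> Z (int m)"] True by blast
  have mult: "Z (int c * t)" for t
  proof (induct t rule: int_induct[where k=0])
    case base then show ?case using Z0 by simp
  next
    case (step1 i) then show ?case using Zadd[of "int c * i" "int c"] c by (simp add: algebra_simps)
  next
    case (step2 i) then show ?case using Zadd[of "int c * i" "- int c"] Zneg[of "int c"] c by (simp add: algebra_simps)
  qed
  show ?thesis
  proof
    assume Zi: "Z i"
    define r where "r = i mod int c"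
    have "r = i + - (int c * (i div int c))" unfolding r_def by (simp add: minus_div_mult_eq_mod[symmetric] algebra_simps)
    hence Zr: "Z r" using Zadd[OF Zi Zneg[OF mult]] by simp
    have r0: "0 \<le> r" "r < int c" using c unfolding r_def by auto
    have "r = 0"
    proof (rule ccontr)
      assume "r \<noteq> 0"
      hence "nat r > 0 \<and> Z (int (nat r))" using Zr r0 by simp
      hence "c \<le> nat r" unfolding c_def by (rule Least_le)
      thus False using r0 by linarith
    qed
    thus "int (ordZ Z) dvd i" using oc unfolding r_def by (simp add: dvd_eq_mod_eq_0)
  next
    assume "int (ordZ Z) dvd i"
    then obtain t where "i = int c * t" using oc by (auto elim: dvdE)
    thus "Z i" using mult by simp
  qed
next
  case False
  hence oc: "ordZ Z = 0" unfolding ordZ_def by (rule if_not_P)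
  show ?thesis
  proof
    assume Zi: "Z i"
    have "i = 0"
    proof (rule ccontr)
      assume "i \<noteq> 0"
      then consider "i > 0" | "i < 0" by linarith
      thus False
      proof cases
        case 1
        hence "nat i > 0 \<and> Z (int (nat i))" using Zi by simp
        thus False using False by blast
      next
        case 2
        hence "nat (-i) > 0 \<and> Z (int (nat (-i)))" using Zneg[OF Zi] by simp
        thus False using False by blast
      qed
    qed
    thus "int (ordZ Z) dvd i" by simp
  next
    assume "int (ordZ Z) dvd i" thus "Z i" using oc Z0 by simp
  qed
qed

lemma cord_ordZ: "cord n k = ordZ (\<lambda>i. (i*k) mod int n = 0)"
  by (simp add: cord_def ordZ_def)

lemma addord_ordZ: "addord z = ordZ (\<lambda>i. zsmul i z = 0)"
  unfolding addord_def ordZ_def zsmul_nat by (rule refl)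

lemma cord_dvd: "(i*k) mod int n = 0 \<longleftrightarrow> int (cord n k) dvd i"
  unfolding cord_ordZ
proof (rule ordZ_dvd)
  fix i j assume "i * k mod int n = 0" "j * k mod int n = 0"
  thus "(i + j) * k mod int n = 0" using mod_add_eq[of "i*k" "int n" "j*k"] by (simp add: distrib_right)
next
  fix i assume "i * k mod int n = 0"
  thus "- i * k mod int n = 0" by (simp add: zmod_zminus1_eq_if)
qed simp

lemma addord_dvd: "zsmul i z = 0 \<longleftrightarrow> int (addord z) dvd i"
  unfolding addord_ordZ
  by (rule ordZ_dvd) (auto simp: zsmul_add zsmul_neg)

definition pw :: "nat \<Rightarrow> int \<Rightarrow> 'a::ab_group_add \<Rightarrow> int \<Rightarrow> int \<times> 'a" where
  "pw n k z i = ((k*i) mod int n, zsmul i z)"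

lemma set_pw: "{((k*i) mod int n, zsmul i z) | i. True} = range (pw n k z)"
  by (auto simp: pw_def)

lemma fst_Qcar: "fst ` (Qcar n :: (int \<times> 'b) set) = {i. i mod int n = i}"
proof safe
  fix i :: int assume "i mod int n = i"
  thus "i \<in> fst ` (Qcar n :: (int \<times> 'b) set)"
    by (intro image_eqI[of _ _ "(i, undefined)"]) (simp_all add: Qcar_def)
qed (auto simp: Qcar_def)

lemma I_from_ord:
  fixes z :: "'a::ab_group_add"
  assumes "cord n k = addord z"
  shows "range (pw n k z) \<inter> {(0, x) | x. True} = {(0, 0)}"
    and "range (pw n k z) \<inter> {(i, 0) | i. i mod int n = i} = {(0, 0)}"
proof -
  have eq: "(i*k) mod int n = 0 \<longleftrightarrow> zsmul i z = 0" for i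
    using cord_dvd[of i k n] addord_dvd[of i z] assms by simp
  have p0: "pw n k z 0 = (0,0)" by (simp add: pw_def)
  have r0: "(0,0) \<in> range (pw n k z)" using p0 by (metis rangeI)
  show "range (pw n k z) \<inter> {(0, x) | x. True} = {(0, 0)}"
  proof
    show "{(0, 0)} \<subseteq> range (pw n k z) \<inter> {(0, x) | x. True}" using r0 by blast
    show "range (pw n k z) \<inter> {(0, x) | x. True} \<subseteq> {(0, 0)}"
    proof
      fix p assume "p \<in> range (pw n k z) \<inter> {(0, x) | x. True}"
      then obtain i where p: "p = pw n k z i" and f: "(k*i) mod int n = 0" by (auto simp: pw_def)
      hence "zsmul i z = 0" using eq[of i] by (simp add: mult.commute)
      thus "p \<in> {(0,0)}" using p f by (simp add: pw_def)
    qed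
  qed
  show "range (pw n k z) \<inter> {(i, 0) | i. i mod int n = i} = {(0, 0)}"
  proof
    show "{(0, 0)} \<subseteq> range (pw n k z) \<inter> {(i, 0) | i. i mod int n = i}" using r0 by auto
    show "range (pw n k z) \<inter> {(i, 0) | i. i mod int n = i} \<subseteq> {(0, 0)}"
    proof
      fix p assume "p \<in> range (pw n k z) \<inter> {(i, 0) | i. i mod int n = i}"
      then obtain i where p: "p = pw n k z i" and f: "zsmul i z = 0" by (auto simp: pw_def)
      hence "(k*i) mod int n = 0" using eq[of i] by (simp add: mult.commute)
      thus "p \<in> {(0,0)}" using p f by (simp add: pw_def)
    qed
  qed
qed

lemma ord_from_I:
  fixes z :: "'a::ab_group_add"
  assumes "range (pw n k z) \<inter> {(0, x) | x. True} = {(0, 0)}"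
    and "range (pw n k z) \<inter> {(i, 0) | i. i mod int n = i} = {(0, 0)}"
  shows "cord n k = addord z"
proof -
  have eq: "(\<lambda>i. (i*k) mod int n = 0) = (\<lambda>i. zsmul i z = 0)"
  proof (rule ext, rule iffI)
    fix i assume h: "(i*k) mod int n = 0"
    have "pw n k z i \<in> {(0, x) | x. True}" using h by (simp add: pw_def mult.commute)
    hence "pw n k z i \<in> range (pw n k z) \<inter> {(0, x) | x. True}" by simp
    hence "pw n k z i = (0,0)" using assms(1) by blast
    thus "zsmul i z = 0" by (simp add: pw_def)
  next
    fix i assume h: "zsmul i z = 0"
    have "pw n k z i \<in> {(i, 0) | i. i mod int n = i}" using h by (simp add: pw_def)
    hence "pw n k z i \<in> range (pw n k z) \<inter> {(i, 0) | i. i mod int n = i}" by simp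
    hence "pw n k z i = (0,0)" using assms(2) by blast
    thus "(i*k) mod int n = 0" by (simp add: pw_def mult.commute)
  qed
  show ?thesis by (simp only: cord_ordZ addord_ordZ eq)
qed


lemma mod_cancel:
  fixes i j j' :: int
  assumes "j mod m = j" "j' mod m = j'" "(i+j) mod m = (i+j') mod m"
  shows "j = j'"
proof -
  have "((i+j) - i) mod m = ((i+j') - i) mod m" using assms(3) by (metis mod_diff_left_eq)
  thus ?thesis using assms(1,2) by simp
qed

locale QL =
  fixes n :: nat and g :: "'a::ab_group_add \<Rightarrow> 'a" and \<gamma> :: "'a \<Rightarrow> 'a \<Rightarrow> 'a"
  assumes cp: "construction_pair g \<gamma>" and adm: "admissible_order n g \<gamma>"
begin

abbreviation M where "M \<equiv> Qmult n g \<gamma>"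

lemma bij_g: "bij g" using cp unfolding construction_pair_def by blast
lemma gsym: "\<gamma> x y = \<gamma> y x" using cp unfolding construction_pair_def by blast
lemma galt[simp]: "\<gamma> x x = 0" using cp unfolding construction_pair_def by blast
lemma gaddL: "\<gamma> (x+y) z = \<gamma> x z + \<gamma> y z" using cp unfolding construction_pair_def by blast
lemma gaddR: "\<gamma> x (y+z) = \<gamma> x y + \<gamma> x z" using cp unfolding construction_pair_def by blast
lemma C1: "inv g (g x + g y) = x + y + \<gamma> x y + inv g (\<gamma> x y) + inv g (inv g (\<gamma> x y))"
  using cp unfolding construction_pair_def by blast
lemma C2[simp]: "\<gamma> (\<gamma> x y) z = 0" using cp unfolding construction_pair_def by blast
lemma C3: "inv g (\<gamma> x y) = \<gamma> (g x) y" using cp unfolding construction_pair_def by blast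

lemma g_inv[simp]: "g (inv g x) = x" using bij_g by (simp add: bij_def surj_f_inv_f)
lemma inv_g[simp]: "inv g (g x) = x" using bij_g by (simp add: bij_def inv_f_f)

lemma g0R[simp]: "\<gamma> x 0 = 0" using gaddR[of x 0 0] by simp
lemma g0L[simp]: "\<gamma> 0 x = 0" using gaddL[of 0 0 x] by simp
lemma gnegR: "\<gamma> x (-y) = - \<gamma> x y" using gaddR[of x y "-y"] by (simp add: eq_neg_iff_add_eq_0 add.commute)
lemma gnegL: "\<gamma> (-x) y = - \<gamma> x y" using gaddL[of x "-x" y] by (simp add: eq_neg_iff_add_eq_0 add.commute)
lemma gg0[simp]: "\<gamma> x (\<gamma> y z) = 0" using gsym C2 by metis

lemma ginv0[simp]: "inv g 0 = 0" using C3[of 0 0] by simp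
lemma g0[simp]: "g 0 = 0" using g_inv[of 0] by simp

lemma funpow_g0[simp]: "(g ^^ m) 0 = 0" by (induct m) simp_all
lemma funpow_ig0[simp]: "(inv g ^^ m) 0 = 0" by (induct m) simp_all
lemma gpow0[simp]: "gpow g k 0 = 0" by (simp add: gpow_def)
lemma gpow_id[simp]: "gpow g 0 = id" by (simp add: gpow_def)

lemma ig_gamma: "(inv g ^^ m) (\<gamma> x y) = \<gamma> ((g^^m) x) y"
  by (induct m) (simp_all add: C3)

lemma g_gamma_inv: "\<gamma> (inv g x) y = g (\<gamma> x y)"
proof -
  have "g (inv g (\<gamma> (inv g x) y)) = g (\<gamma> (g (inv g x)) y)" using C3 by simp
  thus ?thesis by simp
qed

lemma g_gamma: "(g ^^ m) (\<gamma> x y) = \<gamma> ((inv g ^^ m) x) y"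
  by (induct m) (simp_all add: g_gamma_inv)

lemma F1: "gpow g (-k) (\<gamma> x y) = \<gamma> (gpow g k x) y"
proof (cases "k \<ge> 0")
  case True
  show ?thesis
  proof (cases "k = 0")
    case True then show ?thesis by simp
  next
    case False with \<open>k \<ge> 0\<close> show ?thesis by (simp add: gpow_def ig_gamma)
  qed
next
  case False then show ?thesis by (simp add: gpow_def g_gamma)
qed

definition Tf :: "'a \<Rightarrow> int set \<Rightarrow> 'a \<Rightarrow> 'a" where
  "Tf x A w = (\<Sum>k\<in>A. \<gamma> (gpow g k x) w)"

lemma M_eq: "M (i,x) (j,y) = ((i+j) mod int n, gpow g (-j) x + y + Tf x (Iset (i+j) (-j)) y)"
  by (simp add: Qmult_def Tf_def F1)

lemma fstM: "fst (M p q) = (fst p + fst q) mod int n"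
  by (cases p; cases q) (simp add: M_eq)

lemma gamma_sumR: "\<gamma> u (sum f A) = (\<Sum>k\<in>A. \<gamma> u (f k))"
proof (cases "finite A")
  case True then show ?thesis by (induct A rule: finite_induct) (simp_all add: gaddR)
qed simp

lemma Tf_add: "Tf x A (w + w') = Tf x A w + Tf x A w'"
  by (simp add: Tf_def gaddR sum.distrib)
lemma Tf_neg: "Tf x A (-w) = - Tf x A w"
  by (simp add: Tf_def gnegR sum_negf)
lemma Tf_diff: "Tf x A (w - w') = Tf x A w - Tf x A w'"
  using Tf_add[of x A w "-w'"] Tf_neg[of x A w'] by simp
lemma Tf_0[simp]: "Tf x A 0 = 0" by (simp add: Tf_def)
lemma Tf_0L[simp]: "Tf 0 A w = 0" by (simp add: Tf_def)
lemma Tf_Tf[simp]: "Tf x A (Tf y B w) = 0"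
  by (simp add: Tf_def[of x] Tf_def[of y] gamma_sumR)

lemma QcarI: "(i,x) \<in> Qcar n \<longleftrightarrow> i mod int n = i" by (simp add: Qcar_def)
lemma M_in[simp]: "M p q \<in> Qcar n" by (cases p; cases q) (simp add: M_eq Qcar_def)

lemma M_eL: "p \<in> Qcar n \<Longrightarrow> M (0,0) p = p"
  by (cases p) (simp add: M_eq Qcar_def)
lemma M_eR: "p \<in> Qcar n \<Longrightarrow> M p (0,0) = p"
  by (cases p) (simp add: M_eq Qcar_def)

lemma lcancel:
  assumes "c \<in> Qcar n" "c' \<in> Qcar n" "M a c = M a c'"
  shows "c = c'"
proof -
  obtain i x where a: "a = (i,x)" by fastforce
  obtain j y where c: "c = (j,y)" by fastforce
  obtain j' y' where c': "c' = (j',y')" by fastforce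
  have f: "(i+j) mod int n = (i+j') mod int n" using assms(3) a c c' by (simp add: M_eq)
  have jj: "j = j'" using mod_cancel[OF _ _ f] assms(1,2) c c' by (simp add: Qcar_def)
  define A where "A = Iset (i+j) (-j)"
  have "gpow g (-j) x + y + Tf x A y = gpow g (-j) x + y' + Tf x A y'"
    using assms(3) a c c' jj by (simp add: M_eq A_def)
  hence e: "y + Tf x A y = y' + Tf x A y'" by (simp add: add.assoc)
  define d where "d = y - y'"
  have d1: "d = - Tf x A d" using e unfolding d_def Tf_diff by (simp add: algebra_simps)
  have "Tf x A d = 0" using d1 by (metis Tf_Tf Tf_neg)
  hence "d = 0" using d1 by simp
  thus ?thesis using c c' jj unfolding d_def by simp
qed

lemma ldiv_ex:
  assumes "b \<in> Qcar n"
  shows "\<exists>c\<in>Qcar n. M a c = b"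
proof -
  obtain i x where a: "a = (i,x)" by fastforce
  obtain l w where b: "b = (l,w)" by fastforce
  define j where "j = (l - i) mod int n"
  define A where "A = Iset (i+j) (-j)"
  define v where "v = w - gpow g (-j) x"
  define y where "y = v - Tf x A v"
  have cQ: "(j,y) \<in> Qcar n" by (simp add: Qcar_def j_def)
  have f: "(i+j) mod int n = l"
    using assms b unfolding j_def by (simp add: Qcar_def mod_add_right_eq)
  have "Tf x A y = Tf x A v" unfolding y_def Tf_diff by simp
  hence "gpow g (-j) x + y + Tf x A y = w" unfolding y_def v_def by simp
  hence "M a (j,y) = b" using a b f by (simp add: M_eq A_def)
  thus ?thesis using cQ by blast
qed

lemma ldiv:
  assumes "b \<in> Qcar n"
  shows "Qldiv n g \<gamma> a b \<in> Qcar n \<and> M a (Qldiv n g \<gamma> a b) = b"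
proof -
  have "\<exists>!c. c \<in> Qcar n \<and> M a c = b" using ldiv_ex[OF assms] lcancel by blast
  thus ?thesis unfolding Qldiv_def by (rule theI')
qed

lemma ldiv_eq: "c \<in> Qcar n \<Longrightarrow> M a c = b \<Longrightarrow> Qldiv n g \<gamma> a b = c"
  unfolding Qldiv_def by (rule the_equality) (auto intro: lcancel)

lemma cenD:
  assumes "a \<in> center n g \<gamma>"
  shows "a \<in> Qcar n"
    and "\<And>x. x \<in> Qcar n \<Longrightarrow> M a x = M x a"
    and "\<And>x y. x \<in> Qcar n \<Longrightarrow> y \<in> Qcar n \<Longrightarrow> M (M a x) y = M a (M x y)"
    and "\<And>x y. x \<in> Qcar n \<Longrightarrow> y \<in> Qcar n \<Longrightarrow> M (M x a) y = M x (M a y)"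
    and "\<And>x y. x \<in> Qcar n \<Longrightarrow> y \<in> Qcar n \<Longrightarrow> M (M x y) a = M x (M y a)"
  using assms by (auto simp: center_def nucleus_def)

lemma cenI:
  assumes "a \<in> Qcar n"
    and "\<And>x. x \<in> Qcar n \<Longrightarrow> M a x = M x a"
    and "\<And>x y. x \<in> Qcar n \<Longrightarrow> y \<in> Qcar n \<Longrightarrow> M (M a x) y = M a (M x y)"
    and "\<And>x y. x \<in> Qcar n \<Longrightarrow> y \<in> Qcar n \<Longrightarrow> M (M x a) y = M x (M a y)"
    and "\<And>x y. x \<in> Qcar n \<Longrightarrow> y \<in> Qcar n \<Longrightarrow> M (M x y) a = M x (M y a)"
  shows "a \<in> center n g \<gamma>"
  using assms by (auto simp: center_def nucleus_def)

lemma rdiv_eq: "c \<in> Qcar n \<Longrightarrow> a \<in> center n g \<gamma> \<Longrightarrow> M c a = b \<Longrightarrow> Qrdiv n g \<gamma> b a = c"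
  unfolding Qrdiv_def
proof (rule the_equality)
  fix c' assume "c \<in> Qcar n" "a \<in> center n g \<gamma>" "M c a = b" and c': "c' \<in> Qcar n \<and> M c' a = b"
  thus "c' = c" using cenD(2) lcancel by metis
qed auto

lemma e_Q[simp]: "(0,0) \<in> Qcar n" by (simp add: Qcar_def)

lemma e_center: "(0,0) \<in> center n g \<gamma>"
  by (rule cenI) (simp_all add: M_eL M_eR)

lemma center_mult:
  assumes a: "a \<in> center n g \<gamma>" and b: "b \<in> center n g \<gamma>"
  shows "M a b \<in> center n g \<gamma>"
proof -
  note aQ = cenD(1)[OF a] and bQ = cenD(1)[OF b]
  note ac = cenD(2)[OF a] and a1 = cenD(3)[OF a] and a2 = cenD(4)[OF a] and a3 = cenD(5)[OF a]
  note bc = cenD(2)[OF b] and b1 = cenD(3)[OF b] and b2 = cenD(4)[OF b] and b3 = cenD(5)[OF b]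
  have comm: "M (M a b) x = M x (M a b)" if x: "x \<in> Qcar n" for x
  proof -
    have "M (M a b) x = M a (M b x)" using a1 bQ x by simp
    also have "\<dots> = M a (M x b)" using bc x by simp
    also have "\<dots> = M (M a x) b" using a1 x bQ by simp
    also have "\<dots> = M (M x a) b" using ac x by simp
    also have "\<dots> = M x (M a b)" using a2 x bQ by simp
    finally show ?thesis .
  qed
  have l1: "M (M (M a b) x) y = M (M a b) (M x y)" if x: "x \<in> Qcar n" and y: "y \<in> Qcar n" for x y
  proof -
    have "M (M (M a b) x) y = M (M a (M b x)) y" using a1 bQ x by simp
    also have "\<dots> = M a (M (M b x) y)" using a1 y by simp
    also have "\<dots> = M a (M b (M x y))" using b1 x y by simp
    also have "\<dots> = M (M a b) (M x y)" using a1 bQ by simp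
    finally show ?thesis .
  qed
  have l2': "M x (M (M a b) y) = M (M a b) (M x y)" if x: "x \<in> Qcar n" and y: "y \<in> Qcar n" for x y
  proof -
    have "M x (M (M a b) y) = M x (M a (M b y))" using a1 bQ y by simp
    also have "\<dots> = M (M x a) (M b y)" using a2 x by simp
    also have "\<dots> = M (M a x) (M b y)" using ac x by simp
    also have "\<dots> = M a (M x (M b y))" using a1 x by simp
    also have "\<dots> = M a (M (M x b) y)" using b2 x y by simp
    also have "\<dots> = M a (M (M b x) y)" using bc x by simp
    also have "\<dots> = M a (M b (M x y))" using b1 x y by simp
    also have "\<dots> = M (M a b) (M x y)" using a1 bQ by simp
    finally show ?thesis .
  qed
  show ?thesis
  proof (rule cenI)
    show "M a b \<in> Qcar n" by simp
    show "\<And>x. x \<in> Qcar n \<Longrightarrow> M (M a b) x = M x (M a b)" by (rule comm)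
    show "\<And>x y. x \<in> Qcar n \<Longrightarrow> y \<in> Qcar n \<Longrightarrow> M (M (M a b) x) y = M (M a b) (M x y)" by (rule l1)
    show "\<And>x y. x \<in> Qcar n \<Longrightarrow> y \<in> Qcar n \<Longrightarrow> M (M x (M a b)) y = M x (M (M a b) y)"
      using comm l1 l2' by simp
    show "\<And>x y. x \<in> Qcar n \<Longrightarrow> y \<in> Qcar n \<Longrightarrow> M (M x y) (M a b) = M x (M y (M a b))"
      using comm l2' by simp
  qed
qed

lemma center_inv:
  assumes a: "a \<in> center n g \<gamma>" and a': "a' \<in> Qcar n" and inv: "M a a' = (0,0)"
  shows "a' \<in> center n g \<gamma>"
proof -
  note aQ = cenD(1)[OF a]
  note ac = cenD(2)[OF a] and a1 = cenD(3)[OF a] and a2 = cenD(4)[OF a] and a3 = cenD(5)[OF a]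
  have ax: "M a (M a' x) = x" if x: "x \<in> Qcar n" for x
    using a1[OF a' x] inv M_eL[OF x] by simp
  have xa: "M a (M x a') = x" if x: "x \<in> Qcar n" for x
  proof -
    have "M a (M x a') = M (M a x) a'" using a1 x a' by simp
    also have "\<dots> = M (M x a) a'" using ac x by simp
    also have "\<dots> = x" using a2 x a' inv M_eR[OF x] by simp
    finally show ?thesis .
  qed
  show ?thesis
  proof (rule cenI)
    show "a' \<in> Qcar n" by fact
    fix x :: "int \<times> 'a" assume x: "x \<in> Qcar n"
    show "M a' x = M x a'" using ax[OF x] xa[OF x] lcancel by (metis M_in)
    fix y :: "int \<times> 'a" assume y: "y \<in> Qcar n"
    have "M a (M (M a' x) y) = M (M a (M a' x)) y" using a1 y by simp
    also have "\<dots> = M x y" using ax x by simp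
    also have "\<dots> = M a (M a' (M x y))" using ax by simp
    finally show "M (M a' x) y = M a' (M x y)" using lcancel by (metis M_in)
    have "M a (M (M x a') y) = M (M a (M x a')) y" using a1 y by simp
    also have "\<dots> = M x y" using xa x by simp
    also have "\<dots> = M x (M (0,0) y)" using M_eL y by simp
    also have "\<dots> = M x (M (M a a') y)" using inv by simp
    also have "\<dots> = M x (M a (M a' y))" using a1 a' y by simp
    also have "\<dots> = M (M x a) (M a' y)" using a2 x by simp
    also have "\<dots> = M (M a x) (M a' y)" using ac x by simp
    also have "\<dots> = M a (M x (M a' y))" using a1 x by simp
    finally show "M (M x a') y = M x (M a' y)" using lcancel by (metis M_in)
    have "M a (M (M x y) a') = M (M a (M x y)) a'" using a1 a' by simp
    also have "\<dots> = M (M (M x y) a) a'" using ac by simp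
    also have "\<dots> = M (M x y) (M a a')" using a2 a' by simp
    also have "\<dots> = M x y" using inv M_eR by simp
    also have "\<dots> = M x (M y (M a a'))" using inv M_eR y by simp
    also have "\<dots> = M x (M (M y a) a')" using a2 y a' by simp
    also have "\<dots> = M x (M (M a y) a')" using ac y by simp
    also have "\<dots> = M x (M a (M y a'))" using a1 y a' by simp
    also have "\<dots> = M (M x a) (M y a')" using a2 x by simp
    also have "\<dots> = M (M a x) (M y a')" using ac x by simp
    also have "\<dots> = M a (M x (M y a'))" using a1 x by simp
    finally show "M (M x y) a' = M x (M y a')" using lcancel by (metis M_in)
  qed
qed


lemma fix_inv: "g w = w \<Longrightarrow> inv g w = w" by (metis inv_g)

lemma fix_gpow: assumes "g w = w" shows "gpow g m w = w"
proof -
  have "(g ^^ k) w = w" for k by (induct k) (simp_all add: assms)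
  moreover have "(inv g ^^ k) w = w" for k by (induct k) (simp_all add: fix_inv assms)
  ultimately show ?thesis by (simp add: gpow_def)
qed

lemma fix_add: assumes "g x = x" "g y = y" "\<gamma> x y = 0" shows "g (x+y) = x+y"
proof -
  have "inv g (x + y) = x + y" using C1[of x y] assms by simp
  hence "g (inv g (x+y)) = g (x+y)" by simp
  thus ?thesis by simp
qed

lemma fix_neg: assumes "g x = x" shows "g (-x) = -x"
proof -
  have "inv g (x + g (-x)) = 0" using C1[of x "-x"] assms by (simp add: gnegR)
  hence "g (inv g (x + g (-x))) = 0" by simp
  hence "x + g (-x) = 0" by simp
  thus ?thesis by (simp add: eq_neg_iff_add_eq_0 add.commute)
qed

lemma gamma_nsmul: "\<gamma> z (nsmul m z) = 0"
  by (induct m) (simp_all add: gaddR)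

lemma fix_nsmul: "g z = z \<Longrightarrow> g (nsmul m z) = nsmul m z"
  by (induct m) (simp_all add: fix_add gamma_nsmul)

lemma fix_zsmul: "g z = z \<Longrightarrow> g (zsmul i z) = zsmul i z"
  by (simp add: zsmul_def fix_nsmul fix_neg)

lemma gamma_nsmulL: "\<gamma> (nsmul m x) y = nsmul m (\<gamma> x y)"
  by (induct m) (simp_all add: gaddL)

lemma gamma_zsmulL: "\<gamma> (zsmul i x) y = zsmul i (\<gamma> x y)"
  by (simp add: zsmul_def gamma_nsmulL gnegL)

lemma gamma_zsmulR: "\<gamma> x (zsmul i y) = zsmul i (\<gamma> x y)"
  using gamma_zsmulL gsym by metis

lemma gamma_zz[simp]: "\<gamma> (zsmul a z) (zsmul b z) = 0"
  by (simp add: gamma_zsmulL gamma_zsmulR)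

lemma pw_Q[simp]: "pw n k z i \<in> Qcar n" by (simp add: pw_def Qcar_def)
lemma pw_1: "pw n k z 1 = (k mod int n, z)" by (simp add: pw_def)
lemma pw_0: "pw n k z 0 = (0, 0)" by (simp add: pw_def)

lemma pw_mult:
  assumes "g z = z"
  shows "M (pw n k z a) (pw n k z b) = pw n k z (a+b)"
proof -
  have f: "((k*a) mod int n + (k*b) mod int n) mod int n = (k*(a+b)) mod int n"
    by (simp add: mod_add_eq distrib_left)
  have t: "Tf (zsmul a z) A (zsmul b z) = 0" for A
    by (simp add: Tf_def fix_gpow fix_zsmul assms)
  show ?thesis unfolding pw_def
    by (simp add: M_eq f t fix_gpow fix_zsmul assms zsmul_add)
qed

lemma central_fix:
  assumes c: "(k, z) \<in> center n g \<gamma>"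
  shows "g z = z"
proof (cases "n = 1")
  case True
  then have "g ^^ 1 = id" using adm by (simp add: admissible_order_def)
  then show ?thesis by simp
next
  case False
  have q: "(1::int, 0::'a) \<in> Qcar n"
  proof (cases "n = 0")
    case False
    with \<open>n \<noteq> 1\<close> have "int n > 1" by simp
    then show ?thesis by (simp add: Qcar_def)
  qed (simp add: Qcar_def)
  have "M (k,z) (1,0) = M (1,0) (k,z)" using cenD(2)[OF c q] .
  hence "gpow g (-1) z = z" by (simp add: M_eq add.commute)
  hence "inv g z = z" by (simp add: gpow_def)
  thus ?thesis by (metis g_inv)
qed

lemma pw_central:
  assumes c: "(k mod int n, z) \<in> center n g \<gamma>"
  shows "pw n k z i \<in> center n g \<gamma>"
proof -
  have gz: "g z = z" using central_fix[OF c] .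
  have pos: "pw n k z (int m) \<in> center n g \<gamma>" for m
  proof (induct m)
    case 0 then show ?case using e_center by (simp add: pw_0)
  next
    case (Suc m)
    have "pw n k z (int (Suc m)) = M (pw n k z (int m)) (pw n k z 1)"
      by (simp add: pw_mult gz add.commute)
    then show ?case using center_mult[OF Suc] c by (simp add: pw_1)
  qed
  have neg: "pw n k z (- int m) \<in> center n g \<gamma>" for m
    by (rule center_inv[OF pos[of m]]) (simp_all add: pw_mult gz pw_0)
  show ?thesis
  proof (cases "i \<ge> 0")
    case True then show ?thesis using pos[of "nat i"] by simp
  next
    case False then show ?thesis using neg[of "nat (-i)"] by simp
  qed
qed

lemma subloop_pw:
  assumes c: "(k mod int n, z) \<in> center n g \<gamma>"
  shows "subloop n g \<gamma> (range (pw n k z))"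
proof -
  have gz: "g z = z" using central_fix[OF c] .
  have "M (pw n k z a) (pw n k z b) \<in> range (pw n k z)"
    and "Qldiv n g \<gamma> (pw n k z a) (pw n k z b) \<in> range (pw n k z)"
    and "Qrdiv n g \<gamma> (pw n k z b) (pw n k z a) \<in> range (pw n k z)" for a b
  proof -
    show "M (pw n k z a) (pw n k z b) \<in> range (pw n k z)" by (simp add: pw_mult gz)
    have "Qldiv n g \<gamma> (pw n k z a) (pw n k z b) = pw n k z (b - a)"
      by (rule ldiv_eq) (simp_all add: pw_mult gz)
    thus "Qldiv n g \<gamma> (pw n k z a) (pw n k z b) \<in> range (pw n k z)" by simp
    have "Qrdiv n g \<gamma> (pw n k z b) (pw n k z a) = pw n k z (b - a)"
      by (rule rdiv_eq) (simp_all add: pw_mult gz pw_central c)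
    thus "Qrdiv n g \<gamma> (pw n k z b) (pw n k z a) \<in> range (pw n k z)" by simp
  qed
  thus ?thesis unfolding subloop_def by auto
qed

lemma pw_in_sub:
  assumes c: "(k mod int n, z) \<in> center n g \<gamma>" and T: "subloop n g \<gamma> T"
    and a: "(k mod int n, z) \<in> T"
  shows "pw n k z i \<in> T"
proof -
  have gz: "g z = z" using central_fix[OF c] .
  have a1: "pw n k z 1 \<in> T" using a by (simp add: pw_1)
  have cl: "M u v \<in> T" "Qldiv n g \<gamma> u v \<in> T" if "u \<in> T" "v \<in> T" for u v
    using T that unfolding subloop_def by auto
  have p0: "pw n k z 0 \<in> T"
  proof -
    have "Qldiv n g \<gamma> (pw n k z 1) (pw n k z 1) = pw n k z 0"
      by (rule ldiv_eq) (simp_all add: pw_mult gz)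
    thus ?thesis using cl(2)[OF a1 a1] by simp
  qed
  have pos: "pw n k z (int m) \<in> T" for m
  proof (induct m)
    case 0 then show ?case using p0 by simp
  next
    case (Suc m)
    have "pw n k z (int (Suc m)) = M (pw n k z (int m)) (pw n k z 1)"
      by (simp add: pw_mult gz add.commute)
    then show ?case using cl(1)[OF Suc a1] by simp
  qed
  have neg: "pw n k z (- int m) \<in> T" for m
  proof (induct m)
    case 0 then show ?case using p0 by simp
  next
    case (Suc m)
    have "Qldiv n g \<gamma> (pw n k z 1) (pw n k z (- int m)) = pw n k z (- int (Suc m))"
      by (rule ldiv_eq) (simp_all add: pw_mult gz)
    then show ?case using cl(2)[OF a1 Suc] by simp
  qed
  show ?thesis
  proof (cases "i \<ge> 0")
    case True then show ?thesis using pos[of "nat i"] by simp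
  next
    case False then show ?thesis using neg[of "nat (-i)"] by simp
  qed
qed

lemma gen_eq:
  assumes c: "(k mod int n, z) \<in> center n g \<gamma>"
  shows "gen_subloop n g \<gamma> (k mod int n, z) = range (pw n k z)"
proof
  have "(k mod int n, z) \<in> range (pw n k z)" by (metis pw_1 rangeI)
  thus "gen_subloop n g \<gamma> (k mod int n, z) \<subseteq> range (pw n k z)"
    unfolding gen_subloop_def using subloop_pw[OF c] by blast
  show "range (pw n k z) \<subseteq> gen_subloop n g \<gamma> (k mod int n, z)"
    unfolding gen_subloop_def using pw_in_sub[OF c] by blast
qed

lemma normal_pw:
  assumes c: "(k mod int n, z) \<in> center n g \<gamma>"
  shows "normal_subloop n g \<gamma> (range (pw n k z))"
proof -
  have pc: "\<And>s. s \<in> range (pw n k z) \<Longrightarrow> s \<in> center n g \<gamma>" using pw_central[OF c] by blast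
  show ?thesis
    unfolding normal_subloop_def
  proof (intro conjI ballI subloop_pw[OF c])
    fix x y :: "int \<times> 'a" assume x: "x \<in> Qcar n" and y: "y \<in> Qcar n"
    show "(\<lambda>s. M x s) ` range (pw n k z) = (\<lambda>s. M s x) ` range (pw n k z)"
      by (rule image_cong[OF refl]) (metis pc cenD(2) x)
    show "(\<lambda>s. M x (M y s)) ` range (pw n k z) = (\<lambda>s. M (M x y) s) ` range (pw n k z)"
      by (rule image_cong[OF refl]) (metis pc cenD(5) x y)
    show "(\<lambda>s. M (M s x) y) ` range (pw n k z) = (\<lambda>s. M s (M x y)) ` range (pw n k z)"
      by (rule image_cong[OF refl]) (metis pc cenD(3) x y)
  qed
qed


lemma forward:
  assumes NS: "normal_subloop n g \<gamma> S"
    and I1: "S \<inter> {(0, x) | x. True} = {(0, 0)}"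
  shows "\<exists>k z. S = range (pw n k z) \<and> (k mod int n, z) \<in> center n g \<gamma>"
proof -
  have SL: "subloop n g \<gamma> S" using NS by (simp add: normal_subloop_def)
  have SQ: "S \<subseteq> Qcar n" using SL by (simp add: subloop_def)
  have cl: "M u v \<in> S" "Qldiv n g \<gamma> u v \<in> S" if "u \<in> S" "v \<in> S" for u v
    using SL that unfolding subloop_def by auto
  have e: "(0,0) \<in> S" using I1 by blast
  have fQ: "fst s mod int n = fst s" if "s \<in> S" for s
    using SQ that by (cases s) (auto simp: Qcar_def)
  have inj: "s = s'" if s: "s \<in> S" "s' \<in> S" "fst s = fst s'" for s s'
  proof -
    let ?c = "Qldiv n g \<gamma> s s'"
    have cS: "?c \<in> S" using cl s by simp
    have cM: "M s ?c = s'" using ldiv SQ s by blast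
    have "(fst s + fst ?c) mod int n = (fst s + 0) mod int n"
      using cM fstM[of s ?c] s fQ by simp
    hence "fst ?c = 0" using mod_cancel[where m="int n" and j="fst ?c" and j'=0 and i="fst s"] fQ[OF cS] by simp
    hence "?c \<in> S \<inter> {(0, x) | x. True}" using cS by (cases ?c) auto
    hence c0: "?c = (0,0)" using I1 by blast
    have "s' = M s (0,0)" using cM c0 by simp
    moreover have "M s (0,0) = s" using M_eR SQ s(1) by blast
    ultimately show ?thesis by simp
  qed
  have same: "s = s'" if "s \<in> S" "s' \<in> S" "(c + fst s) mod int n = (c + fst s') mod int n" for c s s'
  proof -
    have "fst s = fst s'" using mod_cancel[where m="int n" and i=c and j="fst s" and j'="fst s'"] fQ that by simp
    thus ?thesis using inj that by blast
  qed
  have cent: "s \<in> center n g \<gamma>" if sS: "s \<in> S" for s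
  proof -
    have sQ: "s \<in> Qcar n" using SQ sS by blast
    have H: "\<forall>x\<in>Qcar n. \<forall>y\<in>Qcar n. (\<lambda>s. M x s) ` S = (\<lambda>s. M s x) ` S
      \<and> (\<lambda>s. M x (M y s)) ` S = (\<lambda>s. M (M x y) s) ` S
      \<and> (\<lambda>s. M (M s x) y) ` S = (\<lambda>s. M s (M x y)) ` S"
      using NS unfolding normal_subloop_def by (rule conjunct2)
    have nx: "(\<lambda>s. M x s) ` S = (\<lambda>s. M s x) ` S" if "x \<in> Qcar n" for x
      using bspec[OF bspec[OF H that] that] by (rule conjunct1)
    have nxy: "(\<lambda>s. M x (M y s)) ` S = (\<lambda>s. M (M x y) s) ` S" if "x \<in> Qcar n" "y \<in> Qcar n" for x y
      using conjunct2[OF bspec[OF bspec[OF H that(1)] that(2)]] by (rule conjunct1)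
    have nxy2: "(\<lambda>s. M (M s x) y) ` S = (\<lambda>s. M s (M x y)) ` S" if "x \<in> Qcar n" "y \<in> Qcar n" for x y
      using conjunct2[OF bspec[OF bspec[OF H that(1)] that(2)]] by (rule conjunct2)
    have comm: "M s x = M x s" if x: "x \<in> Qcar n" for x
    proof -
      have "M x s \<in> (\<lambda>s. M s x) ` S" using nx[OF x] sS by blast
      then obtain s' where s': "s' \<in> S" "M x s = M s' x" by blast
      hence "fst (M x s) = fst (M s' x)" by simp
      hence "(fst x + fst s) mod int n = (fst x + fst s') mod int n"
        by (simp add: fstM ac_simps)
      hence "s = s'" by (rule same[OF sS s'(1)])
      thus ?thesis using s' by simp
    qed
    have l3: "M (M x y) s = M x (M y s)" if x: "x \<in> Qcar n" and y: "y \<in> Qcar n" for x y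
    proof -
      have "M x (M y s) \<in> (\<lambda>s. M (M x y) s) ` S" using nxy[OF x y] sS by blast
      then obtain s' where s': "s' \<in> S" "M x (M y s) = M (M x y) s'" by blast
      hence "fst (M x (M y s)) = fst (M (M x y) s')" by simp
      hence "((fst x + fst y) + fst s) mod int n = ((fst x + fst y) + fst s') mod int n"
        by (simp add: fstM mod_add_left_eq mod_add_right_eq ac_simps)
      hence "s = s'" by (rule same[OF sS s'(1)])
      thus ?thesis using s' by simp
    qed
    have l1: "M (M s x) y = M s (M x y)" if x: "x \<in> Qcar n" and y: "y \<in> Qcar n" for x y
    proof -
      have "M (M s x) y \<in> (\<lambda>s. M s (M x y)) ` S" using nxy2[OF x y] sS by blast
      then obtain s' where s': "s' \<in> S" "M (M s x) y = M s' (M x y)" by blast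
      hence "fst (M (M s x) y) = fst (M s' (M x y))" by simp
      hence "((fst x + fst y) + fst s) mod int n = ((fst x + fst y) + fst s') mod int n"
        by (simp add: fstM mod_add_left_eq mod_add_right_eq ac_simps)
      hence "s = s'" by (rule same[OF sS s'(1)])
      thus ?thesis using s' by simp
    qed
    show ?thesis
    proof (rule cenI[OF sQ comm l1])
      fix x y :: "int \<times> 'a" assume x: "x \<in> Qcar n" and y: "y \<in> Qcar n"
      have "M (M x s) y = M (M s x) y" using comm x by simp
      also have "\<dots> = M s (M x y)" using l1 x y by simp
      also have "\<dots> = M (M x y) s" using comm by simp
      also have "\<dots> = M x (M y s)" using l3 x y by simp
      also have "\<dots> = M x (M s y)" using comm y by simp
      finally show "M (M x s) y = M x (M s y)" .
      show "M (M x y) s = M x (M y s)" using l3 x y by simp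
    qed assumption+
  qed
  have negS: "\<exists>c\<in>S. (fst s + fst c) mod int n = 0" if "s \<in> S" for s
  proof -
    let ?c = "Qldiv n g \<gamma> s (0,0)"
    have c1: "?c \<in> S" by (rule cl(2)[OF that e])
    have c2: "M s ?c = (0,0)" using ldiv[OF e_Q] by blast
    have c3: "(fst s + fst ?c) mod int n = 0" using fstM[of s ?c] c2 by simp
    show ?thesis
    proof (rule bexI[where x="?c"])
      show "?c \<in> S" by (rule c1)
      show "(fst s + fst ?c) mod int n = 0" by (rule c3)
    qed
  qed
  show ?thesis
  proof (cases "\<exists>s\<in>S. fst s > 0")
    case False
    have S0: "S = {(0,0)}"
    proof
      show "{(0,0)} \<subseteq> S" using e by simp
      show "S \<subseteq> {(0,0)}"
      proof
        fix s assume sS: "s \<in> S"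
        from negS[OF sS] obtain c where c: "c \<in> S" "(fst s + fst c) mod int n = 0" ..
        have f0: "fst s = 0"
        proof (cases "n = 0")
          case True
          have "fst s \<le> 0" "fst c \<le> 0" using False sS c(1) by (auto simp: not_less)
          then show ?thesis using c(2) True by simp
        next
          case nz: False
          have "fst s mod int n \<ge> 0" using nz by simp
          hence "0 \<le> fst s" using fQ[OF sS] by simp
          moreover have "fst s \<le> 0" using False sS by (auto simp: not_less)
          ultimately show ?thesis by simp
        qed
        have "s = (0,0)" by (rule inj[OF sS e]) (simp add: f0)
        thus "s \<in> {(0,0)}" by simp
      qed
    qed
    have "pw n 0 (0::'a) = (\<lambda>i. (0,0))" by (rule ext) (simp add: pw_def)
    hence R0: "range (pw n 0 (0::'a)) = {(0,0)}" by simp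
    have C0: "(0 mod int n, 0::'a) \<in> center n g \<gamma>" using e_center by simp
    show ?thesis
    proof (intro exI conjI)
      show "S = range (pw n 0 (0::'a))" using S0 R0 by simp
      show "(0 mod int n, 0::'a) \<in> center n g \<gamma>" by (rule C0)
    qed
  next
    case True
    define P where "P = (\<lambda>m::nat. m > 0 \<and> (\<exists>s\<in>S. fst s = int m))"
    define d where "d = (LEAST m. P m)"
    have "P (nat (fst s))" if "s \<in> S" "fst s > 0" for s
      unfolding P_def using that by (intro conjI bexI[where x=s]) simp_all
    hence "\<exists>m. P m" using True by blast
    hence Pd: "P d" unfolding d_def by (rule LeastI_ex)
    then obtain s0 where s0: "s0 \<in> S" "fst s0 = int d" unfolding P_def by blast
    define z where "z = snd s0"
    have aS: "(int d, z) \<in> S" using s0 unfolding z_def by (cases s0) simp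
    have dpos: "d > 0" using Pd P_def by simp
    have dmod: "int d mod int n = int d" using fQ[OF aS] by simp
    have ac: "(int d mod int n, z) \<in> center n g \<gamma>" using cent[OF aS] dmod by simp
    have gz: "g z = z" using central_fix[OF ac] .
    have aS': "(int d mod int n, z) \<in> S" using aS dmod by simp
    have sub: "range (pw n (int d) z) \<subseteq> S"
      using pw_in_sub[OF ac SL aS'] by blast
    have "S \<subseteq> range (pw n (int d) z)"
    proof
      fix s assume sS: "s \<in> S"
      define i0 where "i0 = fst s"
      define q where "q = i0 div int d"
      define r where "r = i0 mod int d"
      have r0: "0 \<le> r" "r < int d" using dpos unfolding r_def by auto
      have tS: "M s (pw n (int d) z (-q)) \<in> S" using cl(1)[OF sS] sub by blast
      have ft: "fst (M s (pw n (int d) z (-q))) = (i0 - int d * q) mod int n"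
        unfolding fstM i0_def by (simp add: pw_def mod_add_right_eq)
      have "i0 - int d * q = r" unfolding q_def r_def by (simp add: minus_div_mult_eq_mod[symmetric] algebra_simps)
      hence ft2: "fst (M s (pw n (int d) z (-q))) = r mod int n" using ft by simp
      have rm: "r mod int n = r"
      proof (cases "n = 0")
        case False
        have "int d mod int n < int n" using False by simp
        hence "int d < int n" using dmod by simp
        then show ?thesis using r0 by simp
      qed simp
      have "r = 0"
      proof (rule ccontr)
        assume "r \<noteq> 0"
        hence "nat r > 0" "int (nat r) = r" using r0 by auto
        hence "P (nat r)" unfolding P_def using tS ft2 rm by (intro conjI bexI[where x="M s (pw n (int d) z (-q))"]) simp_all
        hence "d \<le> nat r" unfolding d_def by (rule Least_le)
        thus False using r0 by linarith
      qed
      hence i0q: "i0 = int d * q" using mult_div_mod_eq[of "int d" i0] unfolding r_def q_def by simp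
      have "fst (pw n (int d) z q) = fst s"
        using i0q fQ[OF sS] unfolding i0_def by (simp add: pw_def)
      hence "s = pw n (int d) z q" by (intro inj[OF sS subsetD[OF sub rangeI]]) simp
      thus "s \<in> range (pw n (int d) z)" by simp
    qed
    hence SR: "S = range (pw n (int d) z)" using sub by (rule equalityI)
    show ?thesis
    proof (intro exI conjI)
      show "S = range (pw n (int d) z)" by (rule SR)
      show "(int d mod int n, z) \<in> center n g \<gamma>" by (rule ac)
    qed
  qed
qed

end

theorem mainTheorem17:
  fixes n :: nat and g :: "'a::ab_group_add \<Rightarrow> 'a" and \<gamma> :: "'a \<Rightarrow> 'a \<Rightarrow> 'a"
    and S :: "(int \<times> 'a) set"
  assumes "construction_pair g \<gamma>"
    and "admissible_order n g \<gamma>"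
    and "S \<subseteq> Qcar n" and "S \<noteq> {}"
  shows "(normal_subloop n g \<gamma> S
          \<and> S \<inter> {(0, x) | x. True} = {(0, 0)}
          \<and> S \<inter> {(i, 0) | i. i \<in> fst ` Qcar n} = {(0, 0)})
     \<longleftrightarrow> (\<exists>(k::int) (z::'a).
             S = gen_subloop n g \<gamma> (k mod int n, z)
           \<and> S = {((k * i) mod int n, zsmul i z) | i. True}
           \<and> cord n k = addord z
           \<and> (k mod int n, z) \<in> center n g \<gamma>)"
proof -
  interpret QL n g \<gamma> using assms(1,2) by unfold_locales
  show ?thesis
    unfolding fst_Qcar set_pw
  proof
    assume H: "normal_subloop n g \<gamma> S \<and> S \<inter> {(0, x) | x. True} = {(0, 0)}
          \<and> S \<inter> {(i, 0) | i. i \<in> {i. i mod int n = i}} = {(0, 0)}"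
    have NS: "normal_subloop n g \<gamma> S" using H by (rule conjunct1)
    have I1: "S \<inter> {(0, x) | x. True} = {(0, 0)}" using H by (elim conjE)
    have I2: "S \<inter> {(i, 0) | i. i mod int n = i} = {(0, 0)}" using H by (elim conjE) simp
    obtain k z where Sk: "S = range (pw n k z)" and c: "(k mod int n, z) \<in> center n g \<gamma>"
      using forward[OF NS I1] by blast
    have o: "cord n k = addord z" using ord_from_I[of n k z] I1 I2 Sk by simp
    show "\<exists>k z. S = gen_subloop n g \<gamma> (k mod int n, z) \<and> S = range (pw n k z)
        \<and> cord n k = addord z \<and> (k mod int n, z) \<in> center n g \<gamma>"
    proof (intro exI conjI)
      show "S = gen_subloop n g \<gamma> (k mod int n, z)" using gen_eq[OF c] Sk by simp
      show "S = range (pw n k z)" by (rule Sk)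
      show "cord n k = addord z" by (rule o)
      show "(k mod int n, z) \<in> center n g \<gamma>" by (rule c)
    qed
  next
    assume "\<exists>k z. S = gen_subloop n g \<gamma> (k mod int n, z) \<and> S = range (pw n k z)
        \<and> cord n k = addord z \<and> (k mod int n, z) \<in> center n g \<gamma>"
    then obtain k z where Sk: "S = range (pw n k z)" and o: "cord n k = addord z"
      and c: "(k mod int n, z) \<in> center n g \<gamma>" by blast
    have "normal_subloop n g \<gamma> S" using normal_pw[OF c] Sk by simp
    moreover have "S \<inter> {(0, x) | x. True} = {(0, 0)}" using I_from_ord(1)[OF o] Sk by simp
    moreover have "S \<inter> {(i, 0) | i. i \<in> {i. i mod int n = i}} = {(0, 0)}"
      using I_from_ord(2)[OF o] Sk by simp
    ultimately show "normal_subloop n g \<gamma> S \<and> S \<inter> {(0, x) | x. True} = {(0, 0)}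
          \<and> S \<inter> {(i, 0) | i. i \<in> {i. i mod int n = i}} = {(0, 0)}" by blast
  qed
qed

end
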